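(* Let $\tilde{\boldsymbol{\gamma}}\ge0$ be a downlink SINR vector such that $\mathbf{I}-\tilde{\mathbf{F}}(\tilde{\boldsymbol{\gamma}})$ and $\mathbf{I}-\tilde{\mathbf{H}}(\tilde{\boldsymbol{\gamma}})$ are invertible, and let $\tilde{\mathbf{p}}(\tilde{\boldsymbol{\gamma}})=(\mathbf{I}-\tilde{\mathbf{F}}(\tilde{\boldsymbol{\gamma}}))^{-1}\tilde{\mathbf{U}}(\tilde{\boldsymbol{\gamma}})$. Then $\tilde{\boldsymbol{\gamma}}$ is feasible, i.e. $\tilde p_i(\tilde{\boldsymbol{\gamma}})\ge0$ for all $i\in\mathcal{M}$ and $\sum_{i\in\mathcal{M}^{\mathcal{B}}_m}\tilde p_i(\tilde{\boldsymbol{\gamma}})\le\tilde P^{\max}_m$ for all $m\in\mathcal{B}$, if and only if $$0\le \tilde P_m(\tilde{\boldsymbol{\gamma}})\le \tilde P^{\max}_m\quad\text{for all } m\in\mathcal{B},$$ where $\tilde{\mathbf{P}}(\tilde{\boldsymbol{\gamma}})=(\mathbf{I}-\tilde{\mathbf{H}}(\tilde{\boldsymbol{\gamma}}))^{-1}\tilde{\mathbf{N}}^*$.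
   Context: Downlink cellular model: users $\mathcal{M}=\{1,\dots,M\}$, BSs $\mathcal{B}=\{1,\dots,B\}$; user $i$ served by BS $b_i$, $\mathcal{M}^{\mathcal{B}}_m=\{i:b_i=m\}$. Downlink gains $\tilde h_{i,m}>0$ (BS $m$ to user $i$), noises $\tilde N_i>0$, BS power budgets $\tilde P^{\max}_m>0$. $\tilde U_i=\tilde\gamma_i\tilde N_i/\tilde h_{i,b_i}$; $\tilde F_{ii}=0$, $\tilde F_{ij}=\tilde\gamma_i\tilde h_{i,b_j}/\tilde h_{i,b_i}$ ($i\ne j$), so $\tilde{\mathbf{p}}(\tilde{\boldsymbol{\gamma}})$ is the power vector achieving downlink SINRs $\tilde\gamma_i(\tilde{\mathbf p})=\frac{\tilde h_{i,b_i}\tilde p_i}{\sum_{j\ne i}\tilde h_{i,b_j}\tilde p_j+\tilde N_i}=\tilde\gamma_i$. With $\tilde\theta_i=\tilde\gamma_i/(\tilde\gamma_i+1)$: $\tilde H_{mm}=\sum_{i\in\mathcal{M}^{\mathcal{B}}_m}\tilde\theta_i$, $\tilde H_{mn}=\sum_{i\in\mathcal{M}^{\mathcal{B}}_m}\frac{\tilde h_{i,n}}{\tilde h_{i,m}}\tilde\theta_i$ for $m\ne n$, and $\tilde N^*_m=\sum_{i\in\mathcal{M}^{\mathcal{B}}_m}\tilde\theta_i\tilde N_i/\tilde h_{i,m}$. *)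

theory Defs
  imports "HOL-Analysis.Analysis"
begin

text \<open>Users are indexed by a finite type 'm, base stations by a finite type 'b.
  bs i is the serving BS b_i, h i m the downlink gain from BS m to user i,
  N i the noise of user i, Pmax m the power budget of BS m.\<close>

definition dl_U :: "('m::finite \<Rightarrow> 'b) \<Rightarrow> ('m \<Rightarrow> 'b \<Rightarrow> real) \<Rightarrow> ('m \<Rightarrow> real) \<Rightarrow> real^'m \<Rightarrow> real^'m" where
  "dl_U bs h N g = (\<chi> i. g$i * N i / h i (bs i))"

definition dl_F :: "('m::finite \<Rightarrow> 'b) \<Rightarrow> ('m \<Rightarrow> 'b \<Rightarrow> real) \<Rightarrow> real^'m \<Rightarrow> real^'m^'m" where
  "dl_F bs h g = (\<chi> i j. if i = j then 0 else g$i * h i (bs j) / h i (bs i))"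

definition dl_theta :: "real^'m::finite \<Rightarrow> 'm \<Rightarrow> real" where
  "dl_theta g i = g$i / (g$i + 1)"

definition dl_H :: "('m::finite \<Rightarrow> 'b::finite) \<Rightarrow> ('m \<Rightarrow> 'b \<Rightarrow> real) \<Rightarrow> real^'m \<Rightarrow> real^'b^'b" where
  "dl_H bs h g = (\<chi> m n. if m = n then (\<Sum>i\<in>{i. bs i = m}. dl_theta g i)
                        else (\<Sum>i\<in>{i. bs i = m}. h i n / h i m * dl_theta g i))"

definition dl_Nstar :: "('m::finite \<Rightarrow> 'b::finite) \<Rightarrow> ('m \<Rightarrow> 'b \<Rightarrow> real) \<Rightarrow> ('m \<Rightarrow> real) \<Rightarrow> real^'m \<Rightarrow> real^'b" where
  "dl_Nstar bs h N g = (\<chi> m. \<Sum>i\<in>{i. bs i = m}. dl_theta g i * N i / h i m)"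

definition dl_p :: "('m::finite \<Rightarrow> 'b) \<Rightarrow> ('m \<Rightarrow> 'b \<Rightarrow> real) \<Rightarrow> ('m \<Rightarrow> real) \<Rightarrow> real^'m \<Rightarrow> real^'m" where
  "dl_p bs h N g = matrix_inv (mat 1 - dl_F bs h g) *v dl_U bs h N g"

definition dl_P :: "('m::finite \<Rightarrow> 'b::finite) \<Rightarrow> ('m \<Rightarrow> 'b \<Rightarrow> real) \<Rightarrow> ('m \<Rightarrow> real) \<Rightarrow> real^'m \<Rightarrow> real^'b" where
  "dl_P bs h N g = matrix_inv (mat 1 - dl_H bs h g) *v dl_Nstar bs h N g"

definition dl_feasible :: "('m::finite \<Rightarrow> 'b::finite) \<Rightarrow> ('m \<Rightarrow> 'b \<Rightarrow> real) \<Rightarrow> ('m \<Rightarrow> real) \<Rightarrow> ('b \<Rightarrow> real) \<Rightarrow> real^'m \<Rightarrow> bool" where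
  "dl_feasible bs h N Pmax g \<longleftrightarrow>
     (\<forall>i. 0 \<le> dl_p bs h N g $ i) \<and>
     (\<forall>m. (\<Sum>i\<in>{i. bs i = m}. dl_p bs h N g $ i) \<le> Pmax m)"

end

theory Submission
  imports Defs
begin

lemma minv_props:
  fixes A :: "real^'n::finite^'n"
  assumes "invertible A"
  shows "A ** matrix_inv A = mat 1 \<and> matrix_inv A ** A = mat 1"
  using assms unfolding invertible_def matrix_inv_def by (rule someI_ex)

lemma minv_solve:
  fixes A :: "real^'n::finite^'n"
  assumes "invertible A"
  shows "A *v (matrix_inv A *v b) = b"
  using minv_props[OF assms] by (simp add: matrix_vector_mul_assoc)

lemma minv_unique:
  fixes A :: "real^'n::finite^'n"
  assumes "invertible A" "A *v x = b"
  shows "matrix_inv A *v b = x"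
  using minv_props[OF assms(1)] assms(2)
  by (metis matrix_vector_mul_assoc matrix_vector_mul_lid)

lemma sum_delta_aux[simp]:
  fixes x :: "real^'n::finite"
  shows "(\<Sum>j\<in>UNIV. x$j * (if i = j then 1 else 0)) = x$i"
  by (simp add: if_distrib[of "\<lambda>y. x$_ * y"] cong: if_cong)

theorem corollary2:
  fixes bs :: "'m::finite \<Rightarrow> 'b::finite"
    and h :: "'m \<Rightarrow> 'b \<Rightarrow> real"
    and N :: "'m \<Rightarrow> real"
    and Pmax :: "'b \<Rightarrow> real"
    and g :: "real^'m"
  assumes h_pos: "\<And>i m. h i m > 0"
    and N_pos: "\<And>i. N i > 0"
    and Pmax_pos: "\<And>m. Pmax m > 0"
    and g_nonneg: "\<And>i. g$i \<ge> 0"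
    and invF: "invertible (mat 1 - dl_F bs h g)"
    and invH: "invertible (mat 1 - dl_H bs h g)"
  shows "dl_feasible bs h N Pmax g \<longleftrightarrow>
         (\<forall>m. 0 \<le> dl_P bs h N g $ m \<and> dl_P bs h N g $ m \<le> Pmax m)"
proof -
  define p where "p = dl_p bs h N g"
  define Q :: "real^'b" where "Q = (\<chi> n. \<Sum>j\<in>{j. bs j = n}. p$j)"
  define T where "T i = (\<Sum>j\<in>UNIV. h i (bs j) * p$j)" for i
  have eqp: "(mat 1 - dl_F bs h g) *v p = dl_U bs h N g"
    unfolding p_def dl_p_def by (rule minv_solve[OF invF])
  have T_Q: "T i = (\<Sum>n\<in>UNIV. h i n * Q$n)" for i
  proof -
    have "T i = (\<Sum>n\<in>UNIV. \<Sum>j\<in>{j. j \<in> UNIV \<and> bs j = n}. h i (bs j) * p$j)"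
      unfolding T_def by (rule sum.group[symmetric]) auto
    also have "\<dots> = (\<Sum>n\<in>UNIV. h i n * Q$n)"
      unfolding Q_def by (auto simp: sum_distrib_left intro!: sum.cong)
    finally show ?thesis .
  qed
  have pform: "p$i = dl_theta g i * (T i + N i) / h i (bs i)" for i
  proof -
    have c: "((mat 1 - dl_F bs h g) *v p)$i = g$i * N i / h i (bs i)"
      using eqp by (simp add: dl_U_def)
    have s1: "(\<Sum>j\<in>UNIV. (mat 1 - dl_F bs h g)$i$j * p$j)
        = p$i - (\<Sum>j\<in>UNIV. (if i = j then 0 else g$i * h i (bs j) / h i (bs i)) * p$j)"
      by (simp add: dl_F_def mat_def algebra_simps sum_subtractf if_distrib[of "\<lambda>x. x * _"]
            sum.delta cong: if_cong)
    have s2: "(\<Sum>j\<in>UNIV. (if i = j then 0 else g$i * h i (bs j) / h i (bs i)) * p$j)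
        = g$i / h i (bs i) * (T i - h i (bs i) * p$i)"
    proof -
      have "(\<Sum>j\<in>UNIV. (if i = j then 0 else g$i * h i (bs j) / h i (bs i)) * p$j)
          = (\<Sum>j\<in>UNIV. g$i / h i (bs i) * (h i (bs j) * p$j))
            - (\<Sum>j\<in>UNIV. if i = j then g$i / h i (bs i) * (h i (bs j) * p$j) else 0)"
        by (subst sum_subtractf[symmetric]) (auto intro!: sum.cong)
      also have "\<dots> = g$i / h i (bs i) * (T i - h i (bs i) * p$i)"
        by (simp add: T_def sum_distrib_left sum_divide_distrib right_diff_distrib)
      finally show ?thesis .
    qed
    have "p$i - g$i / h i (bs i) * (T i - h i (bs i) * p$i) = g$i * N i / h i (bs i)"
      using c s1 s2 by (simp add: matrix_vector_mult_def)
    moreover have "h i (bs i) > 0" "g$i + 1 > 0" using h_pos g_nonneg[of i] by auto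
    ultimately have E: "p$i * (h i (bs i) * (g$i + 1)) = g$i * (T i + N i)"
      by (simp add: field_simps)
    have pos: "h i (bs i) * (g$i + 1) > 0" using h_pos g_nonneg[of i] by simp
    have "p$i = g$i * (T i + N i) / (h i (bs i) * (g$i + 1))"
      using E pos by (metis less_irrefl nonzero_mult_div_cancel_right)
    then show ?thesis unfolding dl_theta_def by simp
  qed
  have eqQ: "(mat 1 - dl_H bs h g) *v Q = dl_Nstar bs h N g"
  proof (rule vec_eq_iff[THEN iffD2, rule_format])
    fix m
    have Hm: "(\<Sum>n\<in>UNIV. dl_H bs h g $m$n * Q$n)
        = (\<Sum>i\<in>{i. bs i = m}. dl_theta g i * T i / h i m)"
    proof -
      have "(\<Sum>n\<in>UNIV. dl_H bs h g $m$n * Q$n)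
          = (\<Sum>n\<in>UNIV. \<Sum>i\<in>{i. bs i = m}. h i n / h i m * dl_theta g i * Q$n)"
      proof (rule sum.cong[OF refl])
        fix n
        have hm: "\<And>i. h i m / h i m = 1" using h_pos by (metis less_irrefl divide_self)
        show "dl_H bs h g $m$n * Q$n = (\<Sum>i\<in>{i. bs i = m}. h i n / h i m * dl_theta g i * Q$n)"
          by (cases "m = n") (simp_all add: dl_H_def sum_distrib_right hm h_pos[THEN less_imp_neq, THEN not_sym])
      qed
      also have "\<dots> = (\<Sum>i\<in>{i. bs i = m}. \<Sum>n\<in>UNIV. h i n / h i m * dl_theta g i * Q$n)"
        by (rule sum.swap)
      also have "\<dots> = (\<Sum>i\<in>{i. bs i = m}. dl_theta g i * T i / h i m)"
        by (auto simp: T_Q sum_distrib_left sum_divide_distrib intro!: sum.cong)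
      finally show ?thesis .
    qed
    have Qm: "Q$m = (\<Sum>i\<in>{i. bs i = m}. dl_theta g i * (T i + N i) / h i m)"
      unfolding Q_def by (auto simp: pform intro!: sum.cong)
    have "((mat 1 - dl_H bs h g) *v Q)$m = Q$m - (\<Sum>n\<in>UNIV. dl_H bs h g $m$n * Q$n)"
      by (simp add: matrix_vector_mult_def mat_def algebra_simps sum_subtractf
            if_distrib[of "\<lambda>x. x * _"] sum.delta cong: if_cong)
    also have "\<dots> = dl_Nstar bs h N g $ m"
      unfolding Hm Qm dl_Nstar_def
      by (simp add: sum_subtractf[symmetric] field_simps add_divide_distrib)
    finally show "((mat 1 - dl_H bs h g) *v Q)$m = dl_Nstar bs h N g $ m" .
  qed
  have PQ: "dl_P bs h N g = Q"
    unfolding dl_P_def by (rule minv_unique[OF invH eqQ])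
  show ?thesis
  proof
    assume f: "dl_feasible bs h N Pmax g"
    then have p0: "\<And>i. 0 \<le> p$i" and pm: "\<And>m. Q$m \<le> Pmax m"
      unfolding dl_feasible_def p_def Q_def by auto
    show "\<forall>m. 0 \<le> dl_P bs h N g $ m \<and> dl_P bs h N g $ m \<le> Pmax m"
      unfolding PQ using pm p0 by (auto simp: Q_def intro: sum_nonneg)
  next
    assume a: "\<forall>m. 0 \<le> dl_P bs h N g $ m \<and> dl_P bs h N g $ m \<le> Pmax m"
    have "0 \<le> p$i" for i
    proof -
      have "0 \<le> T i" unfolding T_Q
      proof (rule sum_nonneg)
        fix n show "0 \<le> h i n * Q$n" using a PQ h_pos[of i n] by simp
      qed
      moreover have "0 \<le> dl_theta g i" unfolding dl_theta_def using g_nonneg[of i] by simp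
      ultimately show ?thesis unfolding pform using N_pos[of i] h_pos[of i "bs i"]
        by (intro divide_nonneg_pos mult_nonneg_nonneg) auto
    qed
    then show "dl_feasible bs h N Pmax g"
      using a PQ unfolding dl_feasible_def p_def[symmetric] Q_def by auto
  qed
qed

end
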